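(* Let $R$ be a Bézout domain and let $A,B,C\in R^{n\times n}$ satisfy $ABA=ACA$. If $R_r(A)=R_r(AB)$ and $R_r(B)=R_r(BA)$, then $AB$ is similar to $CA$.
   Context: A Bézout domain is an integral domain in which every finitely generated ideal is principal. For $M\in R^{m\times n}$, $R_r(M)=\{Mx : x\in R^{n\times 1}\}\subseteq R^{m\times 1}$ is the column space of $M$. Two matrices $M,N\in R^{n\times n}$ are similar if $M=S^{-1}NS$ for some invertible $S\in R^{n\times n}$. *)

theory Defs
  imports "Jordan_Normal_Form.Matrix"
begin

text \<open>The ideal generated by a finite set S is the set of
  R-linear combinations of elements of S; a principal ideal is (d) = dR.\<close>

class bezout_domain = idom +
  assumes fg_ideal_principal:
    "finite (S :: 'a set) \<Longrightarrow>
       \<exists>d. {x. \<exists>c. x = (\<Sum>s\<in>S. c s * s)} = range (\<lambda>r. d * r)"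

definition col_space :: "'a :: semiring_1 mat \<Rightarrow> 'a vec set" where
  "col_space M = {M *\<^sub>v x | x. x \<in> carrier_vec (dim_col M)}"

end

theory Submission imports Defs "Jordan_Normal_Form.Determinant" begin

definition hcat :: "'a::zero mat \<Rightarrow> 'a mat \<Rightarrow> 'a mat" where
  "hcat X Y = four_block_mat X Y (0\<^sub>m 0 (dim_col X)) (0\<^sub>m 0 (dim_col Y))"
definition vcat :: "'a::zero mat \<Rightarrow> 'a mat \<Rightarrow> 'a mat" where
  "vcat P Q = four_block_mat P (0\<^sub>m (dim_row P) 0) Q (0\<^sub>m (dim_row Q) 0)"

lemma four_block_triv:
  assumes "dim_row D = 0" "dim_col D = 0" "dim_col B = 0" "dim_row C = 0"
  shows "four_block_mat Z B C D = Z"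
  by (rule eq_matI, insert assms, auto)

lemma hcat_carrier[simp]: "X \<in> carrier_mat n a \<Longrightarrow> Y \<in> carrier_mat n b \<Longrightarrow> hcat X Y \<in> carrier_mat n (a+b)"
  unfolding hcat_def carrier_mat_def by auto
lemma vcat_carrier[simp]: "P \<in> carrier_mat a k \<Longrightarrow> Q \<in> carrier_mat b k \<Longrightarrow> vcat P Q \<in> carrier_mat (a+b) k"
  unfolding vcat_def carrier_mat_def by auto

lemma hcat_vcat_mult:
  fixes X :: "'a::comm_ring_1 mat"
  assumes X: "X \<in> carrier_mat n a" and Y: "Y \<in> carrier_mat n b"
    and P: "P \<in> carrier_mat a k" and Q: "Q \<in> carrier_mat b k"
  shows "hcat X Y * vcat P Q = X * P + Y * Q"
proof -
  have "hcat X Y * vcat P Q = four_block_mat (X * P + Y * Q) (X * 0\<^sub>m a 0 + Y * 0\<^sub>m b 0)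
    (0\<^sub>m 0 a * P + 0\<^sub>m 0 b * Q) (0\<^sub>m 0 a * 0\<^sub>m a 0 + 0\<^sub>m 0 b * 0\<^sub>m b 0)"
    unfolding hcat_def vcat_def using X Y P Q
    by (simp only: carrier_matD, intro mult_four_block_mat) auto
  also have "\<dots> = X * P + Y * Q" using X Y P Q by (intro four_block_triv) auto
  finally show ?thesis .
qed

lemma mult_hcat:
  fixes M :: "'a::comm_ring_1 mat"
  assumes M: "M \<in> carrier_mat m n" and X: "X \<in> carrier_mat n a" and Y: "Y \<in> carrier_mat n b"
  shows "M * hcat X Y = hcat (M * X) (M * Y)"
proof -
  have "M = four_block_mat M (0\<^sub>m m 0) (0\<^sub>m 0 n) (0\<^sub>m 0 0)"
    using M by (intro four_block_triv[symmetric]) auto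
  hence "M * hcat X Y = four_block_mat M (0\<^sub>m m 0) (0\<^sub>m 0 n) (0\<^sub>m 0 0) * hcat X Y" by simp
  also have "\<dots> = four_block_mat (M * X + 0\<^sub>m m 0 * 0\<^sub>m 0 a) (M * Y + 0\<^sub>m m 0 * 0\<^sub>m 0 b)
    (0\<^sub>m 0 n * X + 0\<^sub>m 0 0 * 0\<^sub>m 0 a) (0\<^sub>m 0 n * Y + 0\<^sub>m 0 0 * 0\<^sub>m 0 b)"
    unfolding hcat_def using M X Y by (simp only: carrier_matD, intro mult_four_block_mat) auto
  also have "\<dots> = hcat (M * X) (M * Y)" unfolding hcat_def using M X Y
    by (intro cong_four_block_mat) auto
  finally show ?thesis .
qed

lemma vcat_mult:
  fixes M :: "'a::comm_ring_1 mat"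
  assumes M: "M \<in> carrier_mat n m" and P: "P \<in> carrier_mat a n" and Q: "Q \<in> carrier_mat b n"
  shows "vcat P Q * M = vcat (P * M) (Q * M)"
proof -
  have "M = four_block_mat M (0\<^sub>m n 0) (0\<^sub>m 0 m) (0\<^sub>m 0 0)"
    using M by (intro four_block_triv[symmetric]) auto
  hence "vcat P Q * M = vcat P Q * four_block_mat M (0\<^sub>m n 0) (0\<^sub>m 0 m) (0\<^sub>m 0 0)" by simp
  also have "\<dots> = four_block_mat (P * M + 0\<^sub>m a 0 * 0\<^sub>m 0 m) (P * 0\<^sub>m n 0 + 0\<^sub>m a 0 * 0\<^sub>m 0 0)
    (Q * M + 0\<^sub>m b 0 * 0\<^sub>m 0 m) (Q * 0\<^sub>m n 0 + 0\<^sub>m b 0 * 0\<^sub>m 0 0)"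
    unfolding vcat_def using M P Q by (simp only: carrier_matD, intro mult_four_block_mat) auto
  also have "\<dots> = vcat (P * M) (Q * M)" unfolding vcat_def using M P Q
    by (intro cong_four_block_mat) auto
  finally show ?thesis .
qed

lemma vcat_hcat_mult:
  fixes L :: "'a::comm_ring_1 mat"
  assumes L: "L \<in> carrier_mat a n" and Z: "Z \<in> carrier_mat b n"
    and H: "H \<in> carrier_mat n c" and N: "N \<in> carrier_mat n d"
  shows "vcat L Z * hcat H N = four_block_mat (L * H) (L * N) (Z * H) (Z * N)"
proof -
  have "vcat L Z * hcat H N = four_block_mat (L * H + 0\<^sub>m a 0 * 0\<^sub>m 0 c) (L * N + 0\<^sub>m a 0 * 0\<^sub>m 0 d)
    (Z * H + 0\<^sub>m b 0 * 0\<^sub>m 0 c) (Z * N + 0\<^sub>m b 0 * 0\<^sub>m 0 d)"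
    unfolding vcat_def hcat_def using L Z H N by (simp only: carrier_matD, intro mult_four_block_mat) auto
  also have "\<dots> = four_block_mat (L * H) (L * N) (Z * H) (Z * N)" using L Z H N
    by (intro cong_four_block_mat) auto
  finally show ?thesis .
qed


definition minj :: "'a::comm_ring_1 mat \<Rightarrow> bool" where
  "minj H = (\<forall>k Y. Y \<in> carrier_mat (dim_col H) k \<longrightarrow> H * Y = 0\<^sub>m (dim_row H) k \<longrightarrow> Y = 0\<^sub>m (dim_col H) k)"

lemma minj_cancel:
  fixes H :: "'a::comm_ring_1 mat"
  assumes H: "H \<in> carrier_mat n r" and inj: "minj H"
    and X: "X \<in> carrier_mat r k" and X': "X' \<in> carrier_mat r k" and eq: "H * X = H * X'"
  shows "X = X'"
proof -
  have "H * (X - X') = H * X - H * X'" using H X X' by (simp add: mult_minus_distrib_mat)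
  also have "\<dots> = 0\<^sub>m n k" using eq H X' by simp
  finally have "X - X' = 0\<^sub>m r k" using inj H X X' minus_carrier_mat[OF X'] unfolding minj_def by auto
  note eq0 = this
  show ?thesis
  proof (rule eq_matI)
    fix i j assume ij: "i < dim_row X'" "j < dim_col X'"
    have "(X - X') $$ (i,j) = 0" using eq0 ij X X' by simp
    thus "X $$ (i,j) = X' $$ (i,j)" using ij X X' by simp
  qed (insert X X', auto)
qed

lemma det_zero_row:
  fixes A :: "'a::comm_ring_1 mat"
  assumes A: "A \<in> carrier_mat n n" and k: "k < n" and z: "\<And>j. j < n \<Longrightarrow> A $$ (k,j) = 0"
  shows "det A = 0"
proof -
  have "(\<Prod> i = 0 ..< n. A $$ (i, p i)) = 0" if p: "p permutes {0..<n}" for p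
    by (rule prod_zero[OF _ bexI[of _ k]], insert k p z, auto simp: permutes_in_image)
  thus ?thesis unfolding det_def'[OF A] by simp
qed

lemma right_inv_imp_left_inv:
  fixes T :: "'a::comm_ring_1 mat"
  assumes T: "T \<in> carrier_mat r r" and W: "W \<in> carrier_mat r r" and TW: "T * W = 1\<^sub>m r"
  shows "W * T = 1\<^sub>m r"
proof -
  have d: "det T * det W = 1" using det_mult[OF T W] TW by simp
  define Ti where "Ti = det W \<cdot>\<^sub>m adj_mat T"
  have Ti: "Ti \<in> carrier_mat r r" unfolding Ti_def using adj_mat[OF T] by simp
  have "Ti * T = det W \<cdot>\<^sub>m (adj_mat T * T)" unfolding Ti_def using adj_mat(1)[OF T] T by (simp add: mult_smult_assoc_mat)
  also have "\<dots> = 1\<^sub>m r"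
  proof -
    have d': "det W * det T = 1" using d by (simp add: mult.commute)
    show ?thesis using adj_mat(3)[OF T] by (intro eq_matI) (auto simp: d' mult.assoc[symmetric])
  qed

  finally have TiT: "Ti * T = 1\<^sub>m r" .
  have "W = (Ti * T) * W" using TiT W by simp
  also have "\<dots> = Ti * (T * W)" using Ti T W by (simp add: assoc_mult_mat)
  also have "\<dots> = Ti" using TW Ti by simp
  finally show ?thesis using TiT by simp
qed

lemma dim_le:
  fixes S :: "'a::comm_ring_1 mat"
  assumes S: "S \<in> carrier_mat n m" and W: "W \<in> carrier_mat m n" and WS: "W * S = 1\<^sub>m m"
  shows "m \<le> n"
proof (rule ccontr)
  assume "\<not> m \<le> n"
  hence nm: "n < m" by simp
  define S' where "S' = vcat S (0\<^sub>m (m-n) m)"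
  define W' where "W' = hcat W (0\<^sub>m m (m-n))"
  have S': "S' \<in> carrier_mat m m" unfolding S'_def using S vcat_carrier[OF S, of "0\<^sub>m (m-n) m" "m-n"] nm by simp
  have W': "W' \<in> carrier_mat m m" unfolding W'_def using W hcat_carrier[OF W, of "0\<^sub>m m (m-n)" "m-n"] nm by simp
  have "W' * S' = W * S + 0\<^sub>m m (m-n) * 0\<^sub>m (m-n) m" unfolding W'_def S'_def
    by (rule hcat_vcat_mult[OF W _ S], auto)
  also have "\<dots> = 1\<^sub>m m" using WS by simp
  finally have "det W' * det S' = 1" using det_mult[OF W' S'] by simp
  moreover have "det S' = 0"
  proof (rule det_zero_row[OF S' nm])
    fix j assume j: "j < m"
    show "S' $$ (n, j) = 0" unfolding S'_def vcat_def using S j nm by simp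
  qed
  ultimately show False by simp
qed

lemma colspace_factor:
  fixes X :: "'a::comm_ring_1 mat"
  assumes X: "X \<in> carrier_mat n m" and Y: "Y \<in> carrier_mat n k"
    and sub: "col_space X \<subseteq> col_space Y"
  shows "\<exists>Z. Z \<in> carrier_mat k m \<and> X = Y * Z"
proof -
  have "\<forall>j. \<exists>z. j < m \<longrightarrow> z \<in> carrier_vec k \<and> Y *\<^sub>v z = col X j"
  proof (intro allI impI)
    fix j
    show "\<exists>z. j < m \<longrightarrow> z \<in> carrier_vec k \<and> Y *\<^sub>v z = col X j"
    proof (cases "j < m")
      case True
      have "col X j = X *\<^sub>v unit_vec m j" using X True
        by (intro eq_vecI) auto
      hence "col X j \<in> col_space X" unfolding col_space_def using X True by auto
      hence "col X j \<in> col_space Y" using sub by auto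
      then obtain z where "z \<in> carrier_vec k" "Y *\<^sub>v z = col X j" unfolding col_space_def using Y by auto
      thus ?thesis by auto
    qed auto
  qed
  then obtain zf where zf: "\<And>j. j < m \<Longrightarrow> zf j \<in> carrier_vec k \<and> Y *\<^sub>v zf j = col X j" by metis
  define Z where "Z = mat k m (\<lambda>(i,j). zf j $ i)"
  have "X = Y * Z"
  proof (rule eq_matI)
    fix i j assume i: "i < dim_row (Y * Z)" and j: "j < dim_col (Y * Z)"
    have "col Z j = zf j" using zf[of j] j unfolding Z_def by (intro eq_vecI) auto
    hence "(Y * Z) $$ (i,j) = (Y *\<^sub>v zf j) $ i" using i j Y unfolding Z_def by simp
    also have "\<dots> = X $$ (i,j)" using zf[of j] i j X Y unfolding Z_def by simp
    finally show "X $$ (i,j) = (Y * Z) $$ (i,j)" by simp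
  qed (insert X Y, auto simp: Z_def)
  thus ?thesis by (intro exI[of _ Z]) (auto simp: Z_def)
qed

lemma colspace_mult_sub:
  fixes Y :: "'a::comm_ring_1 mat"
  assumes Y: "Y \<in> carrier_mat n k" and Z: "Z \<in> carrier_mat k m"
  shows "col_space (Y * Z) \<subseteq> col_space Y"
proof
  fix v assume "v \<in> col_space (Y * Z)"
  then obtain x where x: "x \<in> carrier_vec m" "v = Y * Z *\<^sub>v x" unfolding col_space_def using Y Z by auto
  hence "v = Y *\<^sub>v (Z *\<^sub>v x)" using Y Z by (simp add: assoc_mult_mat_vec)
  moreover have "Z *\<^sub>v x \<in> carrier_vec (dim_col Y)" using Y Z x(1) by auto
  ultimately show "v \<in> col_space Y" unfolding col_space_def by blast
qed


lemma bez2: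
  fixes a b :: "'a::bezout_domain"
  shows "\<exists>e x y. e = x * a + y * b \<and> e dvd a \<and> e dvd b"
proof -
  obtain d where d: "{x. \<exists>c. x = (\<Sum>s\<in>{a,b}. c s * s)} = range (\<lambda>r. d * r)"
    using fg_ideal_principal[of "{a,b}"] by auto
  have "d \<in> {x. \<exists>c. x = (\<Sum>s\<in>{a,b}. c s * s)}" unfolding d by (rule range_eqI[of _ _ 1]) simp
  then obtain c where c: "d = (\<Sum>s\<in>{a,b}. c s * s)" by blast
  have "a = (\<Sum>s\<in>{a,b}. (\<lambda>s. if s = a then 1 else 0) s * s)" by (cases "a = b") auto
  hence "a \<in> range (\<lambda>r. d * r)" unfolding d[symmetric] by (intro CollectI exI)
  hence da: "d dvd a" by auto
  have "b = (\<Sum>s\<in>{a,b}. (\<lambda>s. if s = b then 1 else 0) s * s)" by (cases "a = b") auto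
  hence "b \<in> range (\<lambda>r. d * r)" unfolding d[symmetric] by (intro CollectI exI)
  hence db: "d dvd b" by auto
  show ?thesis
  proof (cases "a = b")
    case True
    thus ?thesis using c da db by (intro exI[of _ d] exI[of _ "c a"] exI[of _ 0]) auto
  next
    case False
    thus ?thesis using c da db by (intro exI[of _ d] exI[of _ "c a"] exI[of _ "c b"]) auto
  qed
qed

lemma gcd_comb:
  fixes f :: "nat \<Rightarrow> 'a::bezout_domain"
  shows "\<exists>d c. d = (\<Sum>j<m. c j * f j) \<and> (\<forall>j<m. d dvd f j)"
proof (induction m)
  case 0
  show ?case by auto
next
  case (Suc m)
  then obtain d c where d: "d = (\<Sum>j<m. c j * f j)" "\<forall>j<m. d dvd f j" by auto
  obtain e x y where e: "e = x * d + y * f m" "e dvd d" "e dvd f m" using bez2[of d "f m"] by auto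
  define c' where "c' = (\<lambda>j. if j < m then x * c j else y)"
  have "(\<Sum>j<Suc m. c' j * f j) = (\<Sum>j<m. c' j * f j) + y * f m" by (simp add: c'_def)
  also have "(\<Sum>j<m. c' j * f j) = x * d" unfolding d(1) c'_def
    by (simp add: sum_distrib_left mult.assoc)
  finally have "e = (\<Sum>j<Suc m. c' j * f j)" using e(1) by simp
  moreover have "\<forall>j<Suc m. e dvd f j"
  proof (intro allI impI)
    fix j assume "j < Suc m"
    then consider "j < m" | "j = m" by linarith
    thus "e dvd f j" using d(2) e(2,3) dvd_trans by cases blast+
  qed
  ultimately show ?case by blast
qed


definition has_basis :: "'a::comm_ring_1 mat \<Rightarrow> bool" where
  "has_basis M = (\<exists>r H Z1 Z2. H \<in> carrier_mat (dim_row M) r \<and> Z1 \<in> carrier_mat r (dim_col M)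
     \<and> Z2 \<in> carrier_mat (dim_col M) r \<and> M = H * Z1 \<and> H = M * Z2 \<and> minj H)"

lemma has_basis_zero:
  assumes M: "M \<in> carrier_mat n m" and z: "\<And>i j. i < n \<Longrightarrow> j < m \<Longrightarrow> M $$ (i,j) = (0::'a::comm_ring_1)"
  shows "has_basis M"
proof -
  have M0: "M = 0\<^sub>m n m" using M z by (intro eq_matI) auto
  have 1: "M = 0\<^sub>m n 0 * 0\<^sub>m 0 m" unfolding M0 by (intro eq_matI) (auto simp: scalar_prod_def)
  have 2: "0\<^sub>m n 0 = M * 0\<^sub>m m 0" using M by (intro eq_matI) auto
  have 3: "minj (0\<^sub>m n 0 :: 'a mat)" unfolding minj_def
  proof (intro allI impI)
    fix k and Y :: "'a mat" assume "Y \<in> carrier_mat (dim_col (0\<^sub>m n 0 :: 'a mat)) k"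
    thus "Y = 0\<^sub>m (dim_col (0\<^sub>m n 0 :: 'a mat)) k" by (intro eq_matI) auto
  qed
  have 4: "0\<^sub>m n 0 \<in> carrier_mat (dim_row M) 0" "0\<^sub>m 0 m \<in> carrier_mat 0 (dim_col M)"
    "0\<^sub>m m 0 \<in> carrier_mat (dim_col M) 0" using M by auto
  show ?thesis unfolding has_basis_def using 1 2 3 4 by blast
qed


lemma has_basis_step:
  fixes M :: "'a::bezout_domain mat"
  assumes M: "M \<in> carrier_mat n m" and i0: "i0 < n"
    and z: "\<And>i j. i < i0 \<Longrightarrow> j < m \<Longrightarrow> M $$ (i,j) = 0"
    and IH: "\<And>M' :: 'a mat. M' \<in> carrier_mat n m \<Longrightarrow> (\<And>i j. i \<le> i0 \<Longrightarrow> j < m \<Longrightarrow> M' $$ (i,j) = 0) \<Longrightarrow> has_basis M'"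
  shows "has_basis M"
proof -
  obtain d c where d: "d = (\<Sum>j<m. c j * M $$ (i0,j))" "\<forall>j<m. d dvd M $$ (i0,j)"
    using gcd_comb[of "\<lambda>j. M $$ (i0,j)" m] by auto
  show ?thesis
  proof (cases "d = 0")
    case True
    hence z0: "\<And>j. j < m \<Longrightarrow> M $$ (i0,j) = 0" using d(2) by auto
    show ?thesis
    proof (rule IH[OF M])
      fix i j assume "i \<le> i0" "j < m"
      thus "M $$ (i,j) = 0" using z z0 by (cases "i = i0") auto
    qed
  next
    case False
    have "\<forall>j. \<exists>q. j < m \<longrightarrow> M $$ (i0,j) = d * q" using d(2) by (auto simp: dvd_def)
    then obtain a' where a': "\<And>j. j < m \<Longrightarrow> M $$ (i0,j) = d * a' j" by metis
    define Cc where "Cc = mat m 1 (\<lambda>(i,_). c i)"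
    define Ar where "Ar = mat 1 m (\<lambda>(_,j). a' j)"
    define V where "V = M * Cc"
    define P where "P = 1\<^sub>m m - Cc * Ar"
    define M' where "M' = M * P"
    have Cc: "Cc \<in> carrier_mat m 1" and Ar: "Ar \<in> carrier_mat 1 m" unfolding Cc_def Ar_def by auto
    have V: "V \<in> carrier_mat n 1" unfolding V_def using M Cc by auto
    have P: "P \<in> carrier_mat m m" unfolding P_def using Cc Ar by auto
    have M': "M' \<in> carrier_mat n m" unfolding M'_def using M P by auto
    have V_ent: "V $$ (i,0) = (\<Sum>j<m. c j * M $$ (i,j))" if i: "i < n" for i
      unfolding V_def Cc_def using M i
      by (auto simp: scalar_prod_def lessThan_atLeast0 mult.commute intro: sum.cong)
    have V0: "V $$ (i0,0) = d" using V_ent i0 d(1) by simp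
    have Vz: "V $$ (i,0) = 0" if "i < i0" for i using V_ent[of i] z[of i] that i0 by simp
    have M'eq: "M' = M - V * Ar"
    proof -
      have "M' = M * 1\<^sub>m m - M * (Cc * Ar)" unfolding M'_def P_def using M Cc Ar
        by (intro mult_minus_distrib_mat[of _ n m]) auto
      also have "\<dots> = M - V * Ar" unfolding V_def using M Cc Ar by (simp add: assoc_mult_mat)
      finally show ?thesis .
    qed
    have M'_ent: "M' $$ (i,j) = M $$ (i,j) - V $$ (i,0) * a' j" if "i < n" "j < m" for i j
      unfolding M'eq using that M V Ar by (simp add: scalar_prod_def Ar_def)
    have M'z: "M' $$ (i,j) = 0" if "i \<le> i0" "j < m" for i j
    proof (cases "i = i0")
      case True thus ?thesis using M'_ent[of i j] that i0 a'[of j] V0 by simp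
    next
      case False thus ?thesis using M'_ent[of i j] that i0 z[of i j] Vz[of i] by simp
    qed
    have hb: "has_basis M'" by (rule IH[OF M' M'z])
    have dm: "dim_row M' = n" "dim_col M' = m" using M' by auto
    obtain r H0 Z1' Z2' where
      H0: "H0 \<in> carrier_mat n r" and Z1': "Z1' \<in> carrier_mat r m" and Z2': "Z2' \<in> carrier_mat m r"
      and M'H0: "M' = H0 * Z1'" and H0M': "H0 = M' * Z2'" and injH0: "minj H0"
      using hb unfolding has_basis_def dm by blast
    define H where "H = hcat V H0"
    define Z1 where "Z1 = vcat Ar Z1'"
    define Z2 where "Z2 = hcat Cc (P * Z2')"
    have H: "H \<in> carrier_mat n (1+r)" unfolding H_def using hcat_carrier[OF V H0] by simp
    have Z1: "Z1 \<in> carrier_mat (1+r) m" unfolding Z1_def using vcat_carrier[OF Ar Z1'] by simp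
    have Z2: "Z2 \<in> carrier_mat m (1+r)" unfolding Z2_def using hcat_carrier[OF Cc mult_carrier_mat[OF P Z2']] by simp
    have MH: "M = H * Z1"
    proof -
      have "H * Z1 = V * Ar + H0 * Z1'" unfolding H_def Z1_def by (rule hcat_vcat_mult[OF V H0 Ar Z1'])
      also have "\<dots> = V * Ar + (M - V * Ar)" using M'H0 M'eq by simp
      also have "\<dots> = M" using M V Ar by (intro eq_matI) auto
      finally show ?thesis by simp
    qed
    have HM: "H = M * Z2"
    proof -
      have "M * Z2 = hcat (M * Cc) (M * (P * Z2'))" unfolding Z2_def
        by (rule mult_hcat[OF M Cc]) (use P Z2' in auto)
      also have "M * (P * Z2') = M' * Z2'" unfolding M'_def using M P Z2' by (simp add: assoc_mult_mat)
      finally show ?thesis unfolding H_def V_def H0M' by simp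
    qed
    have H0z: "H0 $$ (i0,l) = 0" if "l < r" for l
    proof -
      have "H0 $$ (i0,l) = (\<Sum>k\<in>{0..<m}. M' $$ (i0,k) * Z2' $$ (k,l))"
        unfolding H0M' using M' Z2' i0 that by (simp add: scalar_prod_def)
      also have "\<dots> = 0" using M'z by simp
      finally show ?thesis .
    qed
    have injH: "minj H" unfolding minj_def
    proof (intro allI impI)
      fix k Y assume Y': "Y \<in> carrier_mat (dim_col H) k" and HY': "H * Y = 0\<^sub>m (dim_row H) k"
      have Y: "Y \<in> carrier_mat (1+r) k" using Y' H by simp
      have HY: "H * Y = 0\<^sub>m n k" using HY' H by simp
      define Y1 where "Y1 = mat 1 k (\<lambda>(i,j). Y $$ (i,j))"
      define Y2 where "Y2 = mat r k (\<lambda>(i,j). Y $$ (Suc i,j))"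
      have Y1: "Y1 \<in> carrier_mat 1 k" and Y2: "Y2 \<in> carrier_mat r k" unfolding Y1_def Y2_def by auto
      have Ysplit: "Y = vcat Y1 Y2" unfolding vcat_def
        by (rule eq_matI) (use Y in \<open>auto simp: Y1_def Y2_def\<close>)
      have HYs: "H * Y = V * Y1 + H0 * Y2" unfolding H_def Ysplit by (rule hcat_vcat_mult[OF V H0 Y1 Y2])
      have Y1z: "Y1 = 0\<^sub>m 1 k"
      proof (rule eq_matI)
        fix i j assume ij: "i < dim_row (0\<^sub>m 1 k :: 'a mat)" "j < dim_col (0\<^sub>m 1 k :: 'a mat)"
        have "(H * Y) $$ (i0, j) = 0" using HY i0 ij by simp
        also have "(H * Y) $$ (i0, j) = (V * Y1) $$ (i0,j) + (H0 * Y2) $$ (i0,j)"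
          unfolding HYs using V Y1 H0 Y2 i0 ij by simp
        also have "(V * Y1) $$ (i0,j) = d * Y1 $$ (0,j)"
          using V Y1 i0 ij V0 by (simp add: scalar_prod_def)
        also have "(H0 * Y2) $$ (i0,j) = 0"
          using H0 Y2 i0 ij H0z by (simp add: scalar_prod_def)
        finally have "d * Y1 $$ (0,j) = 0" by simp
        hence "Y1 $$ (0,j) = 0" using False by simp
        thus "Y1 $$ (i,j) = 0\<^sub>m 1 k $$ (i,j)" using ij by simp
      qed (use Y1 in auto)
      have "V * Y1 = 0\<^sub>m n k" unfolding Y1z using V by simp
      hence "H0 * Y2 = 0\<^sub>m n k" using HY HYs H0 Y2 by simp
      hence Y2z: "Y2 = 0\<^sub>m r k" using injH0 H0 Y2 unfolding minj_def by auto
      show "Y = 0\<^sub>m (dim_col H) k" unfolding Ysplit Y1z Y2z vcat_def using H by simp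
    qed
    show ?thesis unfolding has_basis_def using M H Z1 Z2 MH HM injH by blast
  qed
qed


lemma has_basis_all:
  fixes M :: "'a::bezout_domain mat"
  assumes M: "M \<in> carrier_mat n m"
  shows "has_basis M"
proof -
  have "\<forall>M :: 'a mat. M \<in> carrier_mat n m \<longrightarrow> (\<forall>i j. i < n - k \<longrightarrow> j < m \<longrightarrow> M $$ (i,j) = 0) \<longrightarrow> has_basis M" for k
  proof (induction k)
    case 0
    show ?case by (auto intro: has_basis_zero)
  next
    case (Suc k)
    show ?case
    proof (intro allI impI)
      fix M :: "'a mat" assume M: "M \<in> carrier_mat n m" and z: "\<forall>i j. i < n - Suc k \<longrightarrow> j < m \<longrightarrow> M $$ (i,j) = 0"
      show "has_basis M"
      proof (cases "n \<le> k")
        case True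
        thus ?thesis using Suc.IH M z by auto
      next
        case False
        show ?thesis
        proof (rule has_basis_step[OF M, of "n - Suc k"])
          show "n - Suc k < n" using False by simp
          show "M $$ (i,j) = 0" if "i < n - Suc k" "j < m" for i j using z that by auto
          show "has_basis M'" if "M' \<in> carrier_mat n m" "\<And>i j. i \<le> n - Suc k \<Longrightarrow> j < m \<Longrightarrow> M' $$ (i,j) = 0"
            for M' :: "'a mat"
          proof -
            have "\<forall>i j. i < n - k \<longrightarrow> j < m \<longrightarrow> M' $$ (i,j) = 0" using that(2) False
              by (metis Suc_diff_Suc less_Suc_eq_le not_le)
            thus ?thesis using Suc.IH that(1) by auto
          qed
        qed
      qed
    qed
  qed
  from this[of n] show ?thesis using M by auto
qed


lemma my_minus_zero_mat[simp]: "(A :: 'a :: ring mat) \<in> carrier_mat nr nc \<Longrightarrow> A - 0\<^sub>m nr nc = A"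
  by (intro eq_matI) auto

lemma add_one_minus_mat: "(A :: 'a :: ring_1 mat) \<in> carrier_mat n n \<Longrightarrow> A + (1\<^sub>m n - A) = 1\<^sub>m n"
  by (intro eq_matI) auto

lemma sim_block:
  fixes M :: "'a::bezout_domain mat"
  assumes M: "M \<in> carrier_mat n n" and H: "H \<in> carrier_mat n r" and L: "L \<in> carrier_mat r n"
    and T: "T \<in> carrier_mat r r"
    and LH: "L * H = 1\<^sub>m r" and MH: "M * H = H * T" and MK: "M * (1\<^sub>m n - H * L) = 0\<^sub>m n n"
  shows "\<exists>s. n = r + s \<and> similar_mat M (four_block_mat T (0\<^sub>m r s) (0\<^sub>m s r) (0\<^sub>m s s))"
proof -
  define K where "K = 1\<^sub>m n - H * L"
  have HL: "H * L \<in> carrier_mat n n" using H L by auto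
  have K: "K \<in> carrier_mat n n" unfolding K_def using minus_carrier_mat[OF HL] by auto
  have hb: "has_basis K" by (rule has_basis_all[OF K])
  have dK: "dim_row K = n" "dim_col K = n" using K by auto
  obtain s N Z1 Z2 where N: "N \<in> carrier_mat n s" and Z1: "Z1 \<in> carrier_mat s n"
    and Z2: "Z2 \<in> carrier_mat n s" and KN: "K = N * Z1" and NK: "N = K * Z2" and injN: "minj N"
    using hb unfolding has_basis_def dK by blast
  have LK: "L * K = 0\<^sub>m r n"
  proof -
    have "L * K = L * 1\<^sub>m n - L * (H * L)" unfolding K_def using L HL
      by (intro mult_minus_distrib_mat[of _ r n]) auto
    also have "L * (H * L) = (L * H) * L" using L H by (simp add: assoc_mult_mat)
    finally show ?thesis using L LH by simp
  qed
  have KH: "K * H = 0\<^sub>m n r"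
  proof -
    have "K * H = 1\<^sub>m n * H - (H * L) * H" unfolding K_def using H HL
      by (intro minus_mult_distrib_mat[of _ n n]) auto
    also have "(H * L) * H = H * (L * H)" using L H by (simp add: assoc_mult_mat)
    finally show ?thesis using H LH by simp
  qed
  have KK: "K * K = K"
  proof -
    have "K * K = (1\<^sub>m n - H * L) * K" by (simp only: K_def[symmetric])
    also have "\<dots> = 1\<^sub>m n * K - (H * L) * K" using K HL
      by (intro minus_mult_distrib_mat[of _ n n]) auto
    also have "(H * L) * K = H * (L * K)" using L H K by (simp add: assoc_mult_mat)
    finally show ?thesis using H K LK by simp
  qed
  have LN: "L * N = 0\<^sub>m r s" unfolding NK using L K Z2 LK by (simp add: assoc_mult_mat[symmetric])
  have MN: "M * N = 0\<^sub>m n s" unfolding NK using M K Z2 MK K_def by (simp add: assoc_mult_mat[symmetric])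
  have Z1H: "Z1 * H = 0\<^sub>m s r"
  proof (rule minj_cancel[OF N injN])
    have "N * (Z1 * H) = K * H" unfolding KN using N Z1 H by (simp add: assoc_mult_mat)
    thus "N * (Z1 * H) = N * 0\<^sub>m s r" using KH N by simp
  qed (use Z1 H in auto)
  have Z1N: "Z1 * N = 1\<^sub>m s"
  proof (rule minj_cancel[OF N injN])
    have "N * (Z1 * N) = K * N" unfolding KN using N Z1 by (simp add: assoc_mult_mat)
    also have "\<dots> = (K * K) * Z2" unfolding NK using K Z2 by (simp add: assoc_mult_mat)
    also have "\<dots> = N" using KK NK by simp
    finally show "N * (Z1 * N) = N * 1\<^sub>m s" using N by simp
  qed (use Z1 N in auto)
  define S where "S = hcat H N"
  define W where "W = vcat L Z1"
  have S: "S \<in> carrier_mat n (r+s)" unfolding S_def using H N by simp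
  have W: "W \<in> carrier_mat (r+s) n" unfolding W_def using L Z1 by simp
  have SW: "S * W = 1\<^sub>m n"
  proof -
    have "S * W = H * L + N * Z1" unfolding S_def W_def by (rule hcat_vcat_mult[OF H N L Z1])
    also have "\<dots> = H * L + K" using KN by simp
    also have "\<dots> = 1\<^sub>m n" unfolding K_def using HL by (rule add_one_minus_mat)
    finally show ?thesis .
  qed
  have WS: "W * S = 1\<^sub>m (r+s)"
  proof -
    have "W * S = four_block_mat (L * H) (L * N) (Z1 * H) (Z1 * N)" unfolding S_def W_def
      by (rule vcat_hcat_mult[OF L Z1 H N])
    thus ?thesis using LH LN Z1H Z1N by simp
  qed
  have n: "n = r + s" using dim_le[OF S W WS] dim_le[OF W S SW] by simp
  define D where "D = four_block_mat T (0\<^sub>m r s) (0\<^sub>m s r) (0\<^sub>m s s)"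
  have D: "D \<in> carrier_mat n n" unfolding D_def n using T by simp
  have WMS: "W * M * S = D"
  proof -
    have "W * M = vcat (L * M) (Z1 * M)" unfolding W_def by (rule vcat_mult[OF M L Z1])
    hence "W * M * S = four_block_mat (L * M * H) (L * M * N) (Z1 * M * H) (Z1 * M * N)"
      unfolding S_def using vcat_hcat_mult[of "L * M" r n "Z1 * M" s H r N s] L M Z1 H N by simp
    also have "L * M * H = T"
    proof -
      have "L * M * H = L * (H * T)" using L M H MH by (simp add: assoc_mult_mat)
      also have "\<dots> = (L * H) * T" using L H T by (simp add: assoc_mult_mat)
      finally show ?thesis using LH T by simp
    qed
    also have "L * M * N = 0\<^sub>m r s" using L M N MN by (simp add: assoc_mult_mat)
    also have "Z1 * M * H = 0\<^sub>m s r"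
    proof -
      have "Z1 * M * H = Z1 * (H * T)" using Z1 M H MH by (simp add: assoc_mult_mat)
      also have "\<dots> = (Z1 * H) * T" using Z1 H T by (simp add: assoc_mult_mat)
      finally show ?thesis using Z1H T by simp
    qed
    also have "Z1 * M * N = 0\<^sub>m s s" using Z1 M N MN by (simp add: assoc_mult_mat)
    finally show ?thesis unfolding D_def .
  qed
  have "M = S * D * W"
  proof -
    have "S * D * W = S * (W * M * S) * W" using WMS by simp
    also have "\<dots> = (S * W) * M * (S * W)"
    proof -
      have S': "S \<in> carrier_mat n n" and W': "W \<in> carrier_mat n n" using S W n by auto
      have X: "W * M \<in> carrier_mat n n" using W' M by auto
      have "S * (W * M * S) * W = S * (W * M) * S * W"
        using assoc_mult_mat[OF S' X S'] by simp
      also have "\<dots> = S * (W * M) * (S * W)"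
        using assoc_mult_mat[OF mult_carrier_mat[OF S' X] S' W'] by simp
      also have "S * (W * M) = S * W * M" using assoc_mult_mat[OF S' W' M] by simp
      finally show ?thesis .
    qed
    also have "\<dots> = M" using SW M by simp
    finally show ?thesis by simp
  qed
  hence "similar_mat M D"
    using S W SW WS M D n by (intro similar_matI[of _ _ S W n]) auto
  thus ?thesis unfolding D_def using n by blast
qed


lemma assoc_dim: assumes "dim_col (A :: 'a :: semiring_0 mat) = dim_row B" "dim_col B = dim_row C"
  shows "A * B * C = A * (B * C)"
proof (rule assoc_mult_mat)
  show "A \<in> carrier_mat (dim_row A) (dim_col A)" by (rule carrier_matI) auto
  show "B \<in> carrier_mat (dim_col A) (dim_col B)" using assms(1) by (intro carrier_matI) auto
  show "C \<in> carrier_mat (dim_col B) (dim_col C)" using assms(2) by (intro carrier_matI) auto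
qed

theorem corollary2p3:
  fixes A B C :: "'a :: bezout_domain mat" and n :: nat
  assumes "A \<in> carrier_mat n n" and "B \<in> carrier_mat n n" and "C \<in> carrier_mat n n"
    and "A * B * A = A * C * A"
    and "col_space A = col_space (A * B)"
    and "col_space B = col_space (B * A)"
  shows "similar_mat (A * B) (C * A)"
proof -
  note A = assms(1) and B = assms(2) and C = assms(3)
  note ABA = assms(4)
  have AB: "A * B \<in> carrier_mat n n" and BA: "B * A \<in> carrier_mat n n" and CA: "C * A \<in> carrier_mat n n"
    using A B C by auto
  obtain X1 where X1: "X1 \<in> carrier_mat n n" and AX1: "A = A * B * X1"
    using colspace_factor[OF A AB] assms(5) by auto
  obtain Y1 where Y1: "Y1 \<in> carrier_mat n n" and BY1: "B = B * A * Y1"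
    using colspace_factor[OF B BA] assms(6) by auto
  note dims0 = carrier_matD[OF A] carrier_matD[OF B] carrier_matD[OF C] carrier_matD[OF X1] carrier_matD[OF Y1]
  have hb: "has_basis A" by (rule has_basis_all[OF A])
  have dA: "dim_row A = n" "dim_col A = n" using A by auto
  obtain r H F E where H: "H \<in> carrier_mat n r" and F: "F \<in> carrier_mat r n"
    and E: "E \<in> carrier_mat n r" and AHF: "A = H * F" and HAE: "H = A * E" and injH: "minj H"
    using hb unfolding has_basis_def dA by blast
  note dims1 = dims0 carrier_matD[OF H] carrier_matD[OF F] carrier_matD[OF E]
  note dims = dims1
  define G where "G = F * B"
  have G: "G \<in> carrier_mat r n" unfolding G_def using F B by auto
  have ABG: "A * B = H * G" unfolding G_def AHF using H F B by (simp add: assoc_dim dims)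
  note dims = dims carrier_matD[OF G]
  define T where "T = G * H"
  have T: "T \<in> carrier_mat r r" unfolding T_def using G H by auto
  note dims = dims carrier_matD[OF T]
  define Wt where "Wt = F * (Y1 * (X1 * E))"
  have Wt: "Wt \<in> carrier_mat r r" unfolding Wt_def using F Y1 X1 E by auto
  have A2: "A = A * B * A * Y1 * X1"
  proof -
    have "A * B = A * (B * A * Y1)" by (subst BY1[symmetric]) (rule refl)
    also have "\<dots> = A * B * A * Y1" using A B Y1 by (simp add: assoc_dim dims)
    finally have "A * B = A * B * A * Y1" .
    hence "A * B * X1 = A * B * A * Y1 * X1" by (rule arg_cong[of _ _ "\<lambda>X. X * X1"])
    thus ?thesis using AX1 by (rule trans[rotated])
  qed
  have hTW: "H = H * (T * Wt)"
  proof -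
    have "A * E = (A * B * A * Y1 * X1) * E" using A2 by (rule arg_cong[of _ _ "\<lambda>X. X * E"])
    hence "H = A * B * A * Y1 * X1 * E" using HAE by simp
    also have "\<dots> = (A * B) * (A * (Y1 * (X1 * E)))" using A B Y1 X1 E by (simp add: assoc_dim dims)
    also have "\<dots> = (H * G) * ((H * F) * (Y1 * (X1 * E)))" by (simp only: ABG AHF[symmetric])
    also have "\<dots> = H * ((G * H) * (F * (Y1 * (X1 * E))))" using H G F Y1 X1 E by (simp add: assoc_dim dims)
    finally show ?thesis unfolding T_def Wt_def .
  qed
  have H1: "H * 1\<^sub>m r = H" using H by simp
  have eqH: "H * (T * Wt) = H * 1\<^sub>m r" using trans[OF hTW[symmetric] H1[symmetric]] .
  have TWt: "T * Wt = 1\<^sub>m r" by (rule minj_cancel[OF H injH mult_carrier_mat[OF T Wt] one_carrier_mat eqH])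
  have WtT: "Wt * T = 1\<^sub>m r" by (rule right_inv_imp_left_inv[OF T Wt TWt])
  note dims = dims carrier_matD[OF Wt]
  define L1 where "L1 = Wt * G"
  have L1: "L1 \<in> carrier_mat r n" unfolding L1_def using Wt G by auto
  note dims = dims carrier_matD[OF L1]
  have L1H: "L1 * H = 1\<^sub>m r" unfolding L1_def using Wt G H WtT by (simp add: assoc_dim dims T_def)
  have ABH: "A * B * H = H * T" unfolding ABG T_def using H G by (simp add: assoc_dim dims)
  have ABK: "A * B * (1\<^sub>m n - H * L1) = 0\<^sub>m n n"
  proof -
    have "A * B * (1\<^sub>m n - H * L1) = A * B * 1\<^sub>m n - A * B * (H * L1)"
      using AB H L1 by (intro mult_minus_distrib_mat[of _ n n]) auto
    also have "A * B * (H * L1) = H * G" unfolding ABG L1_def T_def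
    proof -
      have "H * G * (H * (Wt * G)) = H * ((G * H) * Wt) * G" using H G Wt by (simp add: assoc_dim dims)
      thus "H * G * (H * (Wt * G)) = H * G" using TWt H G unfolding T_def by simp
    qed
    finally have "A * B * (1\<^sub>m n - H * L1) = A * B * 1\<^sub>m n - H * G" .
    moreover have HGc: "H * G \<in> carrier_mat n n" using H G by auto
    ultimately show ?thesis unfolding ABG by (simp only: right_mult_one_mat[OF HGc] minus_r_inv_mat[OF HGc])
  qed
  from sim_block[OF AB H L1 T L1H ABH ABK] obtain s1 where
    s1: "n = r + s1" "similar_mat (A * B) (four_block_mat T (0\<^sub>m r s1) (0\<^sub>m s1 r) (0\<^sub>m s1 s1))" by blast
  define H2 where "H2 = C * H"
  define L2 where "L2 = Wt * (L1 * A)"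
  have H2: "H2 \<in> carrier_mat n r" unfolding H2_def using C H by auto
  have L2: "L2 \<in> carrier_mat r n" unfolding L2_def using Wt L1 A by auto
  note dims = dims carrier_matD[OF H2] carrier_matD[OF L2]
  have ACH: "A * (C * H) = H * T"
  proof -
    have "A * (C * H) = A * C * A * E" unfolding HAE using A C E by (simp add: assoc_dim dims)
    also have "\<dots> = A * B * A * E" using ABA by simp
    also have "\<dots> = A * B * H" unfolding HAE using A B E by (simp add: assoc_dim dims)
    finally show ?thesis using ABH by simp
  qed
  have L2H2: "L2 * H2 = 1\<^sub>m r"
  proof -
    have "L2 * H2 = Wt * (L1 * (A * (C * H)))" unfolding L2_def H2_def using Wt L1 A C H
      by (simp add: assoc_dim dims)
    also have "\<dots> = Wt * ((L1 * H) * T)" unfolding ACH using L1 H T by (simp add: assoc_dim dims)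
    finally show ?thesis using L1H WtT T by simp
  qed
  have CAH2: "C * A * H2 = H2 * T" unfolding H2_def
  proof -
    have "C * A * (C * H) = C * (A * (C * H))" using C A H by (simp add: assoc_dim dims)
    thus "C * A * (C * H) = C * H * T" unfolding ACH using C H T by (simp add: assoc_dim dims)
  qed
  have HL1A: "H * (L1 * A) = A"
  proof -
    have "H * (L1 * A) = H * ((L1 * H) * F)" unfolding AHF using H L1 F by (simp add: assoc_dim dims)
    thus ?thesis using L1H F H AHF by simp
  qed
  have CAK: "C * A * (1\<^sub>m n - H2 * L2) = 0\<^sub>m n n"
  proof -
    have "C * A * (1\<^sub>m n - H2 * L2) = C * A * 1\<^sub>m n - C * A * (H2 * L2)"
      using CA H2 L2 by (intro mult_minus_distrib_mat[of _ n n]) auto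
    also have "C * A * (H2 * L2) = (C * A * H2) * L2" using CA H2 L2 by (simp add: assoc_dim dims)
    also have "\<dots> = H2 * T * L2" using CAH2 by simp
    also have "\<dots> = C * H * ((T * Wt) * (L1 * A))"
    proof -
      have P: "C * H \<in> carrier_mat n r" and Q: "L1 * A \<in> carrier_mat r n" using C H L1 A by auto
      have "H2 * T * L2 = C * H * (T * (Wt * (L1 * A)))" unfolding H2_def L2_def
        using assoc_mult_mat[OF P T mult_carrier_mat[OF Wt Q]] .
      also have "T * (Wt * (L1 * A)) = (T * Wt) * (L1 * A)" using assoc_mult_mat[OF T Wt Q] by simp
      finally show ?thesis .
    qed
    also have "\<dots> = C * H * (L1 * A)" unfolding TWt using L1 A by simp
    also have "\<dots> = C * (H * (L1 * A))" using C H L1 A by (intro assoc_mult_mat) auto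
    also have "\<dots> = C * A" using HL1A by simp
    finally show ?thesis by (simp only: right_mult_one_mat[OF CA] minus_r_inv_mat[OF CA])
  qed
  from sim_block[OF CA H2 L2 T L2H2 CAH2 CAK] obtain s2 where
    s2: "n = r + s2" "similar_mat (C * A) (four_block_mat T (0\<^sub>m r s2) (0\<^sub>m s2 r) (0\<^sub>m s2 s2))" by blast
  have "s1 = s2" using s1(1) s2(1) by simp
  hence "similar_mat (four_block_mat T (0\<^sub>m r s1) (0\<^sub>m s1 r) (0\<^sub>m s1 s1)) (C * A)"
    using similar_mat_sym[OF s2(2)] by simp
  thus ?thesis by (rule similar_mat_trans[OF s1(2)])
qed

end
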